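(* Let $N\geq 3$, $p>1$, $m\in\mathbb N$ and $\alpha_p:=\max\left\{0,\frac{p(N-2)-(N+2)}{2}\right\}$. For $\alpha>\alpha_p$ let $u_\alpha$ be the unique radial solution of $-\Delta u=|x|^\alpha|u|^{p-1}u$ in $B^N$, $u=0$ on $\partial B^N$, with exactly $m$ nodal sets and $u_\alpha(0)>0$. Then there exists a constant $C>0$, not depending on $\alpha$, such that $$\|u_\alpha\|_\infty\geq C\left(\frac{\alpha+N}{N}\right)^{\frac{2}{p-1}}\quad\forall\alpha>\alpha_p.$$
   Context: $B^N$ is the open unit ball in $\mathbb R^N$ centered at the origin. A nodal set is a connected component of the set where the function does not vanish. *)

theory Defs
  imports "HOL-Analysis.Analysis"
begin

definition alpha_p :: "real \<Rightarrow> real \<Rightarrow> real" where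
  "alpha_p N p = max 0 ((p * (N - 2) - (N + 2)) / 2)"

definition henon_classical_solution ::
  "real \<Rightarrow> real \<Rightarrow> ('a::euclidean_space \<Rightarrow> real) \<Rightarrow> bool" where
  "henon_classical_solution a p u \<longleftrightarrow>
     continuous_on (cball 0 1) u \<and>
     (\<forall>x\<in>sphere 0 1. u x = 0) \<and>
     (\<exists>Du D2. (\<forall>x\<in>ball 0 1. (u has_derivative (\<lambda>h. Du x \<bullet> h)) (at x)) \<and>
              (\<forall>x\<in>ball 0 1. (Du has_derivative D2 x) (at x)) \<and>
              (\<forall>i\<in>Basis. \<forall>j\<in>Basis. continuous_on (ball 0 1) (\<lambda>x. D2 x i \<bullet> j)) \<and>
              (\<forall>x\<in>ball 0 1.
                 - (\<Sum>i\<in>Basis. D2 x i \<bullet> i) = norm x powr a * (\<bar>u x\<bar> powr (p - 1) * u x)))"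

definition radial_on_ball :: "('a::euclidean_space \<Rightarrow> real) \<Rightarrow> bool" where
  "radial_on_ball u \<longleftrightarrow> (\<forall>x\<in>cball 0 1. \<forall>y\<in>cball 0 1. norm x = norm y \<longrightarrow> u x = u y)"

definition nodal_sets :: "('a::euclidean_space \<Rightarrow> real) \<Rightarrow> 'a set set" where
  "nodal_sets u = components {x \<in> ball 0 1. u x \<noteq> 0}"

end

theory Submission
  imports Defs
begin


lemma second_deriv_max:
  fixes g g' :: "real \<Rightarrow> real"
  assumes d: "d > 0"
    and dg: "\<And>t. \<bar>t\<bar> < d \<Longrightarrow> (g has_real_derivative g' t) (at t)"
    and dg2: "(g' has_real_derivative L) (at 0)"
    and mx: "\<And>t. \<bar>t\<bar> < d \<Longrightarrow> g t \<le> g 0"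
  shows "L \<le> 0"
proof (rule ccontr)
  assume "\<not> L \<le> 0"
  hence L: "L > 0" by simp
  have g0: "g' 0 = 0"
    by (rule DERIV_local_max[OF dg[of 0] d]) (use d mx in auto)
  obtain e where e: "e > 0" "\<And>h. h > 0 \<Longrightarrow> h < e \<Longrightarrow> g' 0 < g' (0 + h)"
    using DERIV_pos_inc_right[OF dg2 L] by blast
  define h where "h = min e d / 2"
  have h: "h > 0" "h < e" "h < d" using e d by (auto simp: h_def)
  have "g 0 < g h"
  proof (rule DERIV_pos_imp_increasing_open[OF h(1)])
    fix x assume x: "0 < x" "x < h"
    show "\<exists>y. DERIV g x :> y \<and> y > 0"
      using dg[of x] e(2)[of x] x h g0 by auto
  next
    have "\<forall>x\<in>{0..h}. isCont g x"
      using dg h by (metis DERIV_isCont abs_of_nonneg atLeastAtMost_iff order_le_less_trans)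
    thus "continuous_on {0..h} g" by (simp add: continuous_at_imp_continuous_on)
  qed
  moreover have "g h \<le> g 0" using mx h by auto
  ultimately show False by simp
qed



lemma along_line:
  fixes u :: "'a::euclidean_space \<Rightarrow> real" and Du :: "'a \<Rightarrow> 'a" and D2y :: "'a \<Rightarrow> 'a"
  assumes du: "\<forall>x\<in>ball 0 1. (u has_derivative (\<lambda>h. Du x \<bullet> h)) (at x)"
    and d2: "(Du has_derivative D2y) (at y)"
    and y: "y \<in> ball 0 1" and i: "i \<in> Basis"
    and d: "d > 0" "d \<le> 1 - norm y"
    and dpsi: "\<And>t. \<bar>t\<bar> < d \<Longrightarrow> (psi has_real_derivative psi' t) (at t)"
    and dpsi2: "(psi' has_real_derivative P) (at 0)"
    and psile: "\<And>t. \<bar>t\<bar> < d \<Longrightarrow> psi t \<le> norm (y + t *\<^sub>R i) powr b"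
    and psi0: "psi 0 = norm y powr b"
    and K: "K \<ge> 0"
    and mx: "\<And>x. x \<in> cball 0 1 \<Longrightarrow> \<sigma> * u x + K * norm x powr b + e * (norm x)^2
               \<le> \<sigma> * u y + K * norm y powr b + e * (norm y)^2"
  shows "\<sigma> * (D2y i \<bullet> i) + K * P + 2 * e \<le> 0"
proof -
  have ii: "i \<bullet> i = 1" using i by simp
  have inb: "y + t *\<^sub>R i \<in> ball 0 1" if "\<bar>t\<bar> < d" for t
  proof -
    have "norm (y + t *\<^sub>R i) \<le> norm y + \<bar>t\<bar>"
      using norm_triangle_ineq[of y "t *\<^sub>R i"] i by simp
    thus ?thesis using that d by simp
  qed
  have nq: "(norm (y + t *\<^sub>R i))^2 = y \<bullet> y + 2*t*(y \<bullet> i) + t^2" for t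
    unfolding power2_norm_eq_inner
    by (simp add: inner_add_left inner_add_right ii inner_commute[of i y] power2_eq_square algebra_simps)
  define G where "G t = \<sigma> * u (y + t*\<^sub>R i) + K * psi t + e * (y \<bullet> y + 2*t*(y \<bullet> i) + t^2)" for t
  define G' where "G' t = \<sigma> * (Du (y + t*\<^sub>R i) \<bullet> i) + K * psi' t + e * (2*(y \<bullet> i) + 2*t)" for t
  have lin: "((\<lambda>t. y + t *\<^sub>R i) has_derivative (\<lambda>t. t *\<^sub>R i)) (at t)" for t
    by (auto intro!: derivative_eq_intros)
  have du1: "((\<lambda>t. u (y + t*\<^sub>R i)) has_real_derivative (Du (y + t*\<^sub>R i) \<bullet> i)) (at t)" if "\<bar>t\<bar> < d" for t
  proof -
    have "((\<lambda>t. u (y + t*\<^sub>R i)) has_derivative (\<lambda>s. Du (y + t*\<^sub>R i) \<bullet> (s *\<^sub>R i))) (at t)"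
      by (rule has_derivative_compose[OF lin du[rule_format, OF inb[OF that]]])
    moreover have "(\<lambda>s. Du (y + t*\<^sub>R i) \<bullet> (s *\<^sub>R i)) = (*) (Du (y + t*\<^sub>R i) \<bullet> i)"
      by (auto simp: fun_eq_iff)
    ultimately show ?thesis by (simp add: has_field_derivative_def)
  qed
  have du2: "((\<lambda>t. Du (y + t*\<^sub>R i) \<bullet> i) has_real_derivative (D2y i \<bullet> i)) (at 0)"
  proof -
    have d2': "(Du has_derivative D2y) (at (y + 0 *\<^sub>R i))" using d2 by simp
    have "((\<lambda>t. Du (y + t*\<^sub>R i)) has_derivative (\<lambda>s. D2y (s *\<^sub>R i))) (at 0)"
      by (rule has_derivative_compose[OF lin d2'])
    hence "((\<lambda>t. Du (y + t*\<^sub>R i) \<bullet> i) has_derivative (\<lambda>s. D2y (s *\<^sub>R i) \<bullet> i)) (at 0)"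
      by (auto intro!: derivative_eq_intros)
    moreover have "(\<lambda>s. D2y (s *\<^sub>R i) \<bullet> i) = (*) (D2y i \<bullet> i)"
      using linear_scale[OF has_derivative_linear[OF d2]] by (auto simp: fun_eq_iff)
    ultimately show ?thesis by (simp add: has_field_derivative_def)
  qed
  show ?thesis
  proof (rule second_deriv_max[OF d(1), of G G'])
    fix t :: real assume t: "\<bar>t\<bar> < d"
    show "(G has_real_derivative G' t) (at t)"
      unfolding G_def[abs_def] G'_def
      by (rule derivative_eq_intros du1[OF t] dpsi[OF t] refl | simp)+
  next
    show "(G' has_real_derivative \<sigma> * (D2y i \<bullet> i) + K * P + 2 * e) (at 0)"
      unfolding G'_def[abs_def]
      by (rule derivative_eq_intros du2 dpsi2 refl | simp)+
  next
    fix t :: real assume t: "\<bar>t\<bar> < d"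
    have "G t \<le> \<sigma> * u (y + t *\<^sub>R i) + K * norm (y + t *\<^sub>R i) powr b + e * (norm (y + t *\<^sub>R i))^2"
      unfolding G_def nq using psile[OF t] K by (simp add: mult_left_mono)
    also have "\<dots> \<le> \<sigma> * u y + K * norm y powr b + e * (norm y)^2"
      using mx inb[OF t] by auto
    also have "\<dots> = G 0" unfolding G_def using nq[of 0] psi0 by simp
    finally show "G t \<le> G 0" .
  qed
qed



lemma psi_facts:
  fixes y i :: "'a::euclidean_space"
  assumes y: "y \<noteq> 0" and i: "i \<in> Basis" and t: "\<bar>t\<bar> < norm y"
  defines "q \<equiv> \<lambda>t. y \<bullet> y + 2*t*(y \<bullet> i) + t^2"
  shows "q t > 0"
    and "q t powr (b/2) = norm (y + t *\<^sub>R i) powr b"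
    and "((\<lambda>t. q t powr (b/2)) has_real_derivative (b/2) * q t powr (b/2 - 1) * (2*(y \<bullet> i) + 2*t)) (at t)"
proof -
  have ii: "i \<bullet> i = 1" using i by simp
  have nq: "(norm (y + t *\<^sub>R i))^2 = q t"
    unfolding power2_norm_eq_inner q_def
    by (simp add: inner_add_left inner_add_right ii inner_commute[of i y] power2_eq_square algebra_simps)
  have "norm y - \<bar>t\<bar> \<le> norm (y + t *\<^sub>R i)"
    using norm_triangle_ineq2[of y "- (t *\<^sub>R i)"] i by simp
  hence np: "norm (y + t *\<^sub>R i) > 0" using t by linarith
  thus qp: "q t > 0" using nq by (metis zero_less_power)
  show "q t powr (b/2) = norm (y + t *\<^sub>R i) powr b"
    using np unfolding nq[symmetric] by (simp add: powr_powr flip: powr_numeral)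
  have "DERIV q t :> 2*(y \<bullet> i) + 2*t" unfolding q_def
    by (auto intro!: derivative_eq_intros)
  from DERIV_fun_powr[OF this qp, of "b/2"]
  show "((\<lambda>t. q t powr (b/2)) has_real_derivative (b/2) * q t powr (b/2 - 1) * (2*(y \<bullet> i) + 2*t)) (at t)"
    by simp
qed

lemma psi_deriv2:
  fixes y i :: "'a::euclidean_space"
  assumes y: "y \<noteq> 0" and i: "i \<in> Basis"
  defines "q \<equiv> \<lambda>t. y \<bullet> y + 2*t*(y \<bullet> i) + t^2"
  shows "((\<lambda>t. (b/2) * q t powr (b/2 - 1) * (2*(y \<bullet> i) + 2*t)) has_real_derivative
     (b/2) * ((b/2-1) * (y \<bullet> y) powr (b/2-2) * (2*(y \<bullet> i)) * (2*(y \<bullet> i)) + (y \<bullet> y) powr (b/2-1) * 2)) (at 0)"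
proof -
  have qp: "q 0 > 0" using y by (simp add: q_def)
  have "DERIV q 0 :> 2*(y \<bullet> i) + 2*0" unfolding q_def
    by (auto intro!: derivative_eq_intros)
  from DERIV_fun_powr[OF this qp, of "b/2 - 1"]
  have h: "DERIV (\<lambda>t. q t powr (b/2-1)) 0 :> (b/2-1) * (y \<bullet> y) powr (b/2-2) * (2*(y \<bullet> i))"
    by (simp add: q_def)
  have l: "DERIV (\<lambda>t. 2*(y \<bullet> i) + 2*t) 0 :> 2"
    by (auto intro!: derivative_eq_intros)
  show ?thesis
    apply (rule DERIV_cong)
     apply (rule DERIV_mult[OF DERIV_cmult[OF h] l])
    apply (simp add: q_def algebra_simps)
    done
qed



lemma key_bound:
  fixes u :: "'a::euclidean_space \<Rightarrow> real"
  assumes a: "a > 0" and p: "p > 1" and hs: "henon_classical_solution a p u" and u0: "u 0 \<noteq> 0"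
  shows "\<exists>x0\<in>ball 0 1. (\<forall>x\<in>cball 0 1. \<bar>u x\<bar> \<le> \<bar>u x0\<bar>) \<and> \<bar>u x0\<bar> > 0 \<and>
            \<bar>u x0\<bar> \<le> \<bar>u x0\<bar> powr p / ((a+2)*(a+DIM('a)))"
proof -
  from hs obtain Du D2 where cont: "continuous_on (cball 0 1) u"
    and bd: "\<forall>x\<in>sphere 0 1. u x = 0"
    and du: "\<forall>x\<in>ball 0 1. (u has_derivative (\<lambda>h. Du x \<bullet> h)) (at x)"
    and d2: "\<forall>x\<in>ball 0 1. (Du has_derivative D2 x) (at x)"
    and pde: "\<forall>x\<in>ball 0 1. - (\<Sum>i\<in>Basis. D2 x i \<bullet> i) = norm x powr a * (\<bar>u x\<bar> powr (p - 1) * u x)"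
    unfolding henon_classical_solution_def by blast
  have "continuous_on (cball 0 1) (\<lambda>x. \<bar>u x\<bar>)" using cont by (intro continuous_intros)
  then obtain x0 where x0: "x0 \<in> cball 0 1" and x0m: "\<forall>x\<in>cball 0 1. \<bar>u x\<bar> \<le> \<bar>u x0\<bar>"
    using continuous_attains_sup[of "cball (0::'a) 1"] by force
  define M where "M = \<bar>u x0\<bar>"
  have Mpos: "M > 0" using x0m u0 unfolding M_def
    using centre_in_cball[of "0::'a" 1] by force
  have x0b: "x0 \<in> ball 0 1"
  proof (rule ccontr)
    assume "x0 \<notin> ball 0 1"
    hence "x0 \<in> sphere 0 1" using x0 by auto
    thus False using bd Mpos M_def by auto
  qed
  define N where "N = real DIM('a)"
  have N: "N \<ge> 1" unfolding N_def by (simp add: DIM_positive Suc_le_eq)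
  define b where "b = a + 2"
  define K where "K = M powr p / ((a+2)*(a+N))"
  have K: "K \<ge> 0" unfolding K_def using a N by simp
  have "M \<le> K"
  proof (rule field_le_epsilon)
    fix e :: real assume e: "e > 0"
    define \<sigma> :: real where "\<sigma> = (if u x0 \<ge> 0 then 1 else -1)"
    have sM: "\<sigma> * u x0 = M" unfolding \<sigma>_def M_def by auto
    have sabs: "\<bar>\<sigma>\<bar> = 1" unfolding \<sigma>_def by auto
    define w where "w x = \<sigma> * u x + K * norm x powr b + e * (norm x)^2" for x :: 'a
    have "continuous_on (cball 0 1) w" unfolding w_def b_def using cont a
      by (intro continuous_intros continuous_on_powr') auto
    then obtain y where y: "y \<in> cball 0 1" and ym: "\<forall>x\<in>cball 0 1. w x \<le> w y"
      using continuous_attains_sup[of "cball (0::'a) 1" w] by force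
    have wx0: "w x0 \<ge> M" unfolding w_def using sM K e by simp
    show "M \<le> K + e"
    proof (cases "norm y = 1")
      case True
      hence "u y = 0" using bd by auto
      hence "w y = K + e" unfolding w_def using True by simp
      thus ?thesis using wx0 ym x0 by force
    next
      case False
      hence yb: "y \<in> ball 0 1" using y by auto
      define P where "P i = (if y = 0 then 0 else
         (b/2) * ((b/2-1) * (y \<bullet> y) powr (b/2-2) * (2*(y \<bullet> i)) * (2*(y \<bullet> i)) + (y \<bullet> y) powr (b/2-1) * 2))" for i
      have mx: "\<And>x. x \<in> cball 0 1 \<Longrightarrow> \<sigma> * u x + K * norm x powr b + e * (norm x)^2
               \<le> \<sigma> * u y + K * norm y powr b + e * (norm y)^2"
        using ym unfolding w_def by auto
      have Li: "\<sigma> * (D2 y i \<bullet> i) + K * P i + 2 * e \<le> 0" if i: "i \<in> Basis" for i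
      proof (cases "y = 0")
        case True
        show ?thesis
          apply (rule along_line[OF du d2[rule_format, OF yb] yb i, of 1 "\<lambda>_. 0" "\<lambda>_. 0" _ b K \<sigma> e])
          using True K mx b_def a by (auto simp: P_def)
      next
        case False
        define q where "q = (\<lambda>t. y \<bullet> y + 2*t*(y \<bullet> i) + t^2)"
        have n0: "norm y > 0" using False by simp
        show ?thesis
          apply (rule along_line[OF du d2[rule_format, OF yb] yb i, of "min (norm y) (1 - norm y)"
              "\<lambda>t. q t powr (b/2)" "\<lambda>t. (b/2) * q t powr (b/2 - 1) * (2*(y \<bullet> i) + 2*t)" _ b K \<sigma> e])
          using n0 yb apply simp
                  apply simp
          using psi_facts(3)[OF False i] apply (simp add: q_def)
          using psi_deriv2[OF False i] apply (simp add: q_def P_def False)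
          using psi_facts(2)[OF False i] apply (simp add: q_def)
          using psi_facts(2)[OF False i, of 0] n0 apply (simp add: q_def)
          using K mx apply auto
          done
      qed
      have "(\<Sum>i\<in>Basis. \<sigma> * (D2 y i \<bullet> i) + K * P i + 2 * e) \<le> 0"
        using Li by (intro sum_nonpos) auto
      moreover have "(\<Sum>i\<in>Basis. \<sigma> * (D2 y i \<bullet> i) + K * P i + 2 * e) > 0"
      proof -
        have sum_eq: "(\<Sum>i\<in>Basis. \<sigma> * (D2 y i \<bullet> i) + K * P i + 2 * e)
            = \<sigma> * (\<Sum>i\<in>Basis. D2 y i \<bullet> i) + K * (\<Sum>i\<in>Basis. P i) + 2 * e * N"
          by (simp add: sum.distrib sum_distrib_left N_def)
        have up: "\<sigma> * (\<bar>u y\<bar> powr (p - 1) * u y) \<le> M powr p"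
        proof -
          have "\<sigma> * (\<bar>u y\<bar> powr (p - 1) * u y) = \<bar>u y\<bar> powr (p - 1) * (\<sigma> * u y)" by simp
          also have "\<dots> \<le> \<bar>u y\<bar> powr (p - 1) * \<bar>u y\<bar>"
            using sabs abs_ge_self[of "\<sigma> * u y"] by (intro mult_left_mono) (auto simp: abs_mult)
          also have "\<dots> = \<bar>u y\<bar> powr p"
          proof (cases "u y = 0")
            case False thus ?thesis using powr_add[of "\<bar>u y\<bar>" "p-1" 1] by simp
          qed simp
          also have "\<dots> \<le> M powr p" using x0m y p unfolding M_def by (intro powr_mono2) auto
          finally show ?thesis .
        qed
        have t1: "\<sigma> * (\<Sum>i\<in>Basis. D2 y i \<bullet> i) \<ge> - (norm y powr a * M powr p)"
        proof -
          have "\<sigma> * (\<Sum>i\<in>Basis. D2 y i \<bullet> i) = - (norm y powr a * (\<sigma> * (\<bar>u y\<bar> powr (p - 1) * u y)))"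
          proof -
            have "- (\<Sum>i\<in>Basis. D2 y i \<bullet> i) = norm y powr a * (\<bar>u y\<bar> powr (p - 1) * u y)"
              using pde yb by blast
            hence e1: "(\<Sum>i\<in>Basis. D2 y i \<bullet> i) = - (norm y powr a * (\<bar>u y\<bar> powr (p - 1) * u y))"
              by linarith
            show ?thesis unfolding e1 by (simp add: algebra_simps)
          qed
          also have "\<dots> \<ge> - (norm y powr a * M powr p)"
            using up by (simp add: mult_left_mono)
          finally show ?thesis .
        qed
        have t2: "K * (\<Sum>i\<in>Basis. P i) = norm y powr a * M powr p"
        proof (cases "y = 0")
          case True thus ?thesis using a by (simp add: P_def)
        next
          case False
          define Y where "Y = y \<bullet> y"
          have Y: "Y > 0" using False by (simp add: Y_def)
          have sq: "(\<Sum>i\<in>Basis. (y \<bullet> i) * (y \<bullet> i)) = Y"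
            unfolding Y_def by (rule euclidean_inner[symmetric])
          have "(\<Sum>i\<in>Basis. P i) = (\<Sum>i\<in>Basis. (b/2)*(b/2-1)*4 * Y powr (b/2-2) * ((y \<bullet> i) * (y \<bullet> i)) + b * Y powr (b/2-1))"
            unfolding P_def Y_def using False by (intro sum.cong) (auto simp: algebra_simps)
          also have "\<dots> = (b/2)*(b/2-1)*4 * (Y powr (b/2-2) * Y) + N * b * Y powr (b/2-1)"
            by (simp add: sum.distrib sum_distrib_left[symmetric] sq N_def)
          also have "Y powr (b/2-2) * Y = Y powr (b/2-1)"
            using Y powr_add[of Y "b/2-2" 1] by simp
          also have "Y powr (b/2-1) = norm y powr a"
            using Y unfolding Y_def b_def
            by (simp add: powr_powr power2_norm_eq_inner[symmetric] field_simps flip: powr_numeral)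
          finally have "(\<Sum>i\<in>Basis. P i) = ((a+2)*(a+N)) * norm y powr a"
            unfolding b_def by (simp add: field_simps)
          thus ?thesis unfolding K_def using a N by simp
        qed
        have "e * N > 0" using e N by simp
        thus ?thesis unfolding sum_eq using t1 t2 by linarith
      qed
      ultimately show ?thesis by simp
    qed
  qed
  thus ?thesis using x0b x0m Mpos unfolding M_def K_def N_def by auto
qed



theorem lemma3p1:
  fixes p :: real and m :: nat
  assumes "CARD('n::finite) \<ge> 3" and "p > 1"
  shows "\<exists>C>0. \<forall>(a::real) (u :: real^'n \<Rightarrow> real).
           a > alpha_p (real CARD('n)) p \<longrightarrow>
           henon_classical_solution a p u \<longrightarrow> radial_on_ball u \<longrightarrow>
           finite (nodal_sets u) \<longrightarrow> card (nodal_sets u) = m \<longrightarrow> u 0 > 0 \<longrightarrow>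
           (SUP x\<in>ball 0 1. \<bar>u x\<bar>) \<ge>
             C * ((a + real CARD('n)) / real CARD('n)) powr (2 / (p - 1))"
proof (intro exI[of _ 1] conjI allI impI)
  fix a :: real and u :: "real^'n \<Rightarrow> real"
  assume aa: "a > alpha_p (real CARD('n)) p" and hs: "henon_classical_solution a p u"
    and u0: "u 0 > 0"
  have a: "a > 0" using aa unfolding alpha_p_def by simp
  define N where "N = real CARD('n)"
  have N: "N \<ge> 3" using assms(1) unfolding N_def by simp
  obtain x0 where x0: "x0 \<in> ball 0 1" and x0m: "\<forall>x\<in>cball 0 1. \<bar>u x\<bar> \<le> \<bar>u x0\<bar>"
    and Mp: "\<bar>u x0\<bar> > 0" and Mb: "\<bar>u x0\<bar> \<le> \<bar>u x0\<bar> powr p / ((a+2)*(a+N))"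
    using key_bound[OF a assms(2) hs] u0 unfolding N_def by force
  define M where "M = \<bar>u x0\<bar>"
  have M: "M > 0" using Mp M_def by simp
  define D where "D = (a+2)*(a+N)"
  have D: "D > 0" using a N unfolding D_def by simp
  have "M * D \<le> M powr p" using Mb D unfolding M_def D_def by (simp add: field_simps)
  also have "M powr p = M powr (p-1) * M" using powr_add[of M "p-1" 1] M by simp
  finally have MD: "D \<le> M powr (p-1)" using M by (simp add: mult.commute)
  have "((a+N)/N) ^ 2 \<le> D"
  proof -
    have aN: "a \<le> a * N" using mult_left_mono[of 1 N a] a N by simp
    have "a + N \<le> (a+2)*N" unfolding distrib_right using aN N by linarith
    hence "(a+N)/N \<le> a+2" using N by (subst pos_divide_le_eq) auto
    moreover have "N \<le> N * N" using mult_left_mono[of 1 N N] N by simp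
    hence "a + N \<le> (a+N)*N" unfolding distrib_right using aN N by linarith
    hence "(a+N)/N \<le> a+N" using N by (subst pos_divide_le_eq) auto
    moreover have "(a+N)/N \<ge> 0" using a N by simp
    ultimately show ?thesis unfolding D_def power2_eq_square
      by (intro mult_mono) auto
  qed
  hence "((a+N)/N) powr (2/(p-1)) \<le> D powr (1/(p-1))"
    using a N assms(2)
    by (subst powr_powr[symmetric, of _ 2 "1/(p-1)", simplified]) 
       (auto intro!: powr_mono2 simp: powr_numeral)
  also have "\<dots> \<le> (M powr (p-1)) powr (1/(p-1))"
    using MD D assms(2) by (intro powr_mono2) auto
  also have "\<dots> = M" using assms(2) M by (simp add: powr_powr)
  finally have main: "((a+N)/N) powr (2/(p-1)) \<le> M" .
  have "M \<le> (SUP x\<in>ball 0 1. \<bar>u x\<bar>)"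
    unfolding M_def
  proof (rule cSUP_upper[OF x0])
    show "bdd_above ((\<lambda>x. \<bar>u x\<bar>) ` ball 0 1)"
      using x0m by (intro bdd_aboveI[of _ "\<bar>u x0\<bar>"]) auto
  qed
  thus "1 * ((a + real CARD('n)) / real CARD('n)) powr (2 / (p - 1)) \<le> (SUP x\<in>ball 0 1. \<bar>u x\<bar>)"
    using main unfolding N_def by simp
qed simp

end
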